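(* Let $m\ge 2$ be an integer and write the prime factorisation of $m!$ as $m!=\prod_{p\le m} p^{\alpha_p}$, where the product runs over all primes $p\le m$ and each $\alpha_p\ge 1$. Then for any primes $p<q\le m$, $$\frac{\alpha_p}{\alpha_q}\ge \left\lfloor \frac{q}{p}\right\rfloor.$$ *)

theory Defs
  imports Complex_Main "HOL-Computational_Algebra.Primes"
begin

end

theory Submission
  imports Defs
begin

lemma card_dvd_pow:
  fixes p n N :: nat
  assumes p: "prime p" and n: "n > 0"
  shows "card {i\<in>{1..N}. p ^ i dvd n} = min N (multiplicity p n)"
proof -
  have nu: "\<not> is_unit p" using p not_prime_unit by blast
  have n0: "n \<noteq> 0" using n by simp
  have iff: "p ^ i dvd n \<longleftrightarrow> i \<le> multiplicity p n" for i
    using power_dvd_iff_le_multiplicity[OF n0 nu] .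
  have "{i\<in>{1..N}. p ^ i dvd n} = {1..min N (multiplicity p n)}"
    unfolding iff by auto
  thus ?thesis by simp
qed

lemma mult_le:
  fixes p n :: nat
  assumes p: "prime p" and n: "n > 0"
  shows "multiplicity p n \<le> n"
proof -
  have "p ^ multiplicity p n dvd n" by (rule multiplicity_dvd)
  hence "p ^ multiplicity p n \<le> n" using n by (rule dvd_imp_le)
  moreover have "multiplicity p n < 2 ^ multiplicity p n" by simp
  moreover have "2 ^ multiplicity p n \<le> p ^ multiplicity p n"
    using prime_ge_2_nat[OF p] by (simp add: power_mono)
  ultimately show ?thesis by linarith
qed

lemma suc_div:
  fixes m d :: nat
  assumes "d > 0"
  shows "Suc m div d = m div d + (if d dvd Suc m then 1 else 0)"
  using assms by (auto simp: div_Suc dvd_eq_mod_eq_0)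

lemma legendre:
  fixes p m N :: nat
  assumes p: "prime p" and "m \<le> N"
  shows "multiplicity p (fact m) = (\<Sum>i\<in>{1..N}. m div p ^ i)"
  using assms(2)
proof (induction m)
  case 0
  then show ?case by simp
next
  case (Suc m)
  have pos: "p ^ i > 0" for i using prime_gt_0_nat[OF p] by simp
  have "(\<Sum>i\<in>{1..N}. Suc m div p ^ i) =
        (\<Sum>i\<in>{1..N}. m div p ^ i) + (\<Sum>i\<in>{1..N}. (if p ^ i dvd Suc m then 1 else 0))"
    by (simp add: suc_div[OF pos] sum.distrib)
  also have "(\<Sum>i\<in>{1..N}. (if p ^ i dvd Suc m then 1 else 0::nat)) = card {i\<in>{1..N}. p ^ i dvd Suc m}"
    by (simp add: sum.If_cases) (rule arg_cong[where f=card], auto)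
  also have "\<dots> = multiplicity p (Suc m)"
    using card_dvd_pow[OF p, of "Suc m" N] mult_le[OF p, of "Suc m"] Suc.prems by simp
  finally have A: "(\<Sum>i\<in>{1..N}. Suc m div p ^ i) = (\<Sum>i\<in>{1..N}. m div p ^ i) + multiplicity p (Suc m)" .
  have IH: "multiplicity p (fact m) = (\<Sum>i\<in>{1..N}. m div p ^ i)"
    using Suc.IH Suc.prems by linarith
  have B: "(\<Sum>i\<in>{1..N}. Suc m div p ^ i) = multiplicity p (fact m) + multiplicity p (Suc m)"
    using A IH by linarith
  moreover have "multiplicity p (fact (Suc m)) = multiplicity p (Suc m) + multiplicity p (fact m :: nat)"
  proof -
    have "fact (Suc m) = (Suc m) * (fact m :: nat)" by (simp only: fact_Suc of_nat_id)
    moreover have "multiplicity p (Suc m * (fact m :: nat)) = multiplicity p (Suc m) + multiplicity p (fact m :: nat)"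
      by (rule prime_elem_multiplicity_mult_distrib) (use p in auto)
    ultimately show ?thesis by (simp only:)
  qed
  with B show ?case by linarith
qed

lemma term_le:
  fixes p q m i :: nat
  assumes "k * p \<le> q" and "i \<ge> 1" and "q > 0" and "p > 0"
  shows "k * (m div q ^ i) \<le> m div p ^ i"
proof (cases "k = 0")
  case True then show ?thesis by simp
next
  case False
  obtain j where j: "i = Suc j" using assms(2) by (cases i) auto
  have "1 \<le> k ^ j" using False by (simp add: Suc_le_eq)
  hence "k * 1 \<le> k * k ^ j" by (rule mult_left_mono) simp
  hence "k \<le> k ^ i" unfolding j by simp
  hence "k * p ^ i \<le> k ^ i * p ^ i" by (rule mult_right_mono) simp
  also have "\<dots> = (k * p) ^ i" by (rule power_mult_distrib[symmetric])
  also have "\<dots> \<le> q ^ i" by (rule power_mono[OF assms(1)]) simp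
  finally have kp: "k * p ^ i \<le> q ^ i" .
  have "k * (m div q ^ i) * p ^ i = (m div q ^ i) * (k * p ^ i)" by (simp only: ac_simps)
  also have "\<dots> \<le> (m div q ^ i) * q ^ i" by (rule mult_left_mono[OF kp]) simp
  also have "\<dots> \<le> m" using div_mult_mod_eq[of m "q ^ i"] by linarith
  finally have "k * (m div q ^ i) * p ^ i \<le> m" .
  moreover have "p ^ i > 0" using assms(4) by simp
  ultimately show ?thesis by (simp add: less_eq_div_iff_mult_less_eq)
qed

theorem lemma5:
  fixes m p q :: nat
  assumes "m \<ge> 2" and "prime p" and "prime q" and "p < q" and "q \<le> m"
  shows "real (multiplicity p (fact m)) / real (multiplicity q (fact m))
           \<ge> of_int \<lfloor>real q / real p\<rfloor>"
proof -
  define k where "k = q div p"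
  have p0: "p > 0" using assms(2) prime_gt_0_nat by blast
  have q0: "q > 0" using assms(3) prime_gt_0_nat by blast
  have kp: "k * p \<le> q" unfolding k_def using div_mult_mod_eq[of q p] by linarith
  have ap: "multiplicity p (fact m) = (\<Sum>i\<in>{1..m}. m div p ^ i)" using legendre[OF assms(2)] by simp
  have aq: "multiplicity q (fact m) = (\<Sum>i\<in>{1..m}. m div q ^ i)" using legendre[OF assms(3)] by simp
  have "k * multiplicity q (fact m) = (\<Sum>i\<in>{1..m}. k * (m div q ^ i))" by (simp add: aq sum_distrib_left)
  also have "\<dots> \<le> (\<Sum>i\<in>{1..m}. m div p ^ i)" by (rule sum_mono) (use term_le[OF kp _ q0 p0] in auto)
  finally have main: "k * multiplicity q (fact m) \<le> multiplicity p (fact m)" using ap by simp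
  have "q dvd fact m" using assms(5) q0 by (simp add: dvd_fact)
  hence "multiplicity q (fact m) \<ge> 1" using assms(3)
    by (intro multiplicity_geI) (auto simp: not_prime_unit)
  hence pos: "real (multiplicity q (fact m)) > 0" by simp
  have fl: "\<lfloor>real q / real p\<rfloor> = int k" unfolding k_def
    using floor_divide_of_nat_eq[of q p] by simp
  have "real k * real (multiplicity q (fact m)) \<le> real (multiplicity p (fact m))"
  proof -
    have "real (k * multiplicity q (fact m)) \<le> real (multiplicity p (fact m))"
      using main by (rule of_nat_mono)
    thus ?thesis by simp
  qed
  hence "real k \<le> real (multiplicity p (fact m)) / real (multiplicity q (fact m))"
    using pos by (simp add: pos_le_divide_eq)
  thus ?thesis using fl by simp
qed

end
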